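(* Let $a,b,c$ be positive integers that are not all equal, and let $n=a+b+c$. Let $A=\{1,\dots,a\}$, $B=\{a+1,\dots,a+b\}$ and $C=\{a+b+1,\dots,n\}$. Define the $n\times n$ array $M=(M_{i,j})_{i,j\in[n]}$ of subsets of $[n]$ by \[ M_{i,j}=\begin{cases} A&\text{if } i\in A \text{ and } j\in A,\\ B&\text{if } i\in B \text{ and } j\in B,\\ C&\text{if } i\in C \text{ and } j\in C,\\ \emptyset&\text{otherwise}. \end{cases} \] Let $k\ge 1$ and let $N=(N_{i,j})_{i,j\in[n]}$ be any $(n^2,k)$-array. Then there exist $i,j\in[n]$ with $M_{i,j}\cap N_{i,j}\neq\emptyset$.
   Context: $[n]=\{1,2,\dots,n\}$. For positive integers $n,d,k$, an $(n^d,k)$-array is a $d$-dimensional array of dimensions $n\times n\times\cdots\times n$ such that each entry is a subset of $[n]$ of cardinality exactly $k$, and every number in $[n]$ occurs in exactly $k$ of the entries along any axis-parallel line of the array (an axis-parallel line is the set of $n$ cells obtained by fixing all coordinates but one). In particular an $(n^2,k)$-array is an $n\times n$ array of $k$-subsets of $[n]$ in which each symbol of $[n]$ lies in exactly $k$ entries of each row and exactly $k$ entries of each column. *)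

theory Defs
  imports Main
begin

definition array2 :: "nat \<Rightarrow> nat \<Rightarrow> (nat \<Rightarrow> nat \<Rightarrow> nat set) \<Rightarrow> bool" where
  "array2 n k N \<longleftrightarrow>
     (\<forall>i\<in>{1..n}. \<forall>j\<in>{1..n}. N i j \<subseteq> {1..n} \<and> card (N i j) = k) \<and>
     (\<forall>i\<in>{1..n}. \<forall>s\<in>{1..n}. card {j\<in>{1..n}. s \<in> N i j} = k) \<and>
     (\<forall>j\<in>{1..n}. \<forall>s\<in>{1..n}. card {i\<in>{1..n}. s \<in> N i j} = k)"

definition blockM :: "nat \<Rightarrow> nat \<Rightarrow> nat \<Rightarrow> nat \<Rightarrow> nat \<Rightarrow> nat set" where
  "blockM a b c i j =
     (let A = {1..a}; B = {a+1..a+b}; C = {a+b+1..a+b+c} in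
      if i \<in> A \<and> j \<in> A then A
      else if i \<in> B \<and> j \<in> B then B
      else if i \<in> C \<and> j \<in> C then C
      else {})"

end

theory Submission imports Defs begin

definition TT :: "nat set \<Rightarrow> (nat \<Rightarrow> nat \<Rightarrow> nat set) \<Rightarrow> ((nat \<times> nat) \<times> nat) set" where
  "TT I N = Sigma (I \<times> I) (\<lambda>p. N (fst p) (snd p))"

lemma L1:
  assumes fin: "finite I"
    and H: "\<forall>i\<in>I. \<forall>j\<in>I. finite (N i j) \<and> card (N i j) = k"
  shows "card {t \<in> TT I N. P (fst (fst t)) \<and> P (snd (fst t))} = card {x\<in>I. P x} * card {x\<in>I. P x} * k"
proof -
  let ?X = "{x\<in>I. P x}"
  have "{t \<in> TT I N. P (fst (fst t)) \<and> P (snd (fst t))} = Sigma (?X \<times> ?X) (\<lambda>p. N (fst p) (snd p))"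
    unfolding TT_def by auto
  moreover have "card (Sigma (?X \<times> ?X) (\<lambda>p. N (fst p) (snd p))) = (\<Sum>p\<in>?X \<times> ?X. card (N (fst p) (snd p)))"
    using fin H by (intro card_SigmaI) auto
  moreover have "(\<Sum>p\<in>?X \<times> ?X. card (N (fst p) (snd p))) = (\<Sum>p\<in>?X \<times> ?X. k)"
    using H by (intro sum.cong) auto
  ultimately show ?thesis by (simp add: card_cartesian_product)
qed

lemma L2:
  assumes fin: "finite I"
    and H: "\<forall>i\<in>I. \<forall>s\<in>I. card {j\<in>I. s \<in> N i j} = k"
    and sub: "\<forall>i\<in>I. \<forall>j\<in>I. N i j \<subseteq> I"
  shows "card {t \<in> TT I N. P (fst (fst t)) \<and> P (snd t)} = card {x\<in>I. P x} * card {x\<in>I. P x} * k"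
proof -
  let ?X = "{x\<in>I. P x}"
  let ?S = "Sigma (?X \<times> ?X) (\<lambda>p. {j\<in>I. snd p \<in> N (fst p) j})"
  have "bij_betw (\<lambda>((i,s),j). ((i,j),s)) ?S {t \<in> TT I N. P (fst (fst t)) \<and> P (snd t)}"
    using sub unfolding bij_betw_def inj_on_def TT_def by (auto simp: image_iff) blast+
  hence "card {t \<in> TT I N. P (fst (fst t)) \<and> P (snd t)} = card ?S"
    by (simp add: bij_betw_same_card)
  moreover have "card ?S = (\<Sum>p\<in>?X \<times> ?X. card {j\<in>I. snd p \<in> N (fst p) j})"
    using fin by (intro card_SigmaI) auto
  moreover have "(\<Sum>p\<in>?X \<times> ?X. card {j\<in>I. snd p \<in> N (fst p) j}) = (\<Sum>p\<in>?X \<times> ?X. k)"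
    using H by (intro sum.cong) auto
  ultimately show ?thesis by (simp add: card_cartesian_product)
qed

lemma L3:
  assumes fin: "finite I"
    and H: "\<forall>j\<in>I. \<forall>s\<in>I. card {i\<in>I. s \<in> N i j} = k"
    and sub: "\<forall>i\<in>I. \<forall>j\<in>I. N i j \<subseteq> I"
  shows "card {t \<in> TT I N. P (snd (fst t)) \<and> P (snd t)} = card {x\<in>I. P x} * card {x\<in>I. P x} * k"
proof -
  let ?X = "{x\<in>I. P x}"
  let ?S = "Sigma (?X \<times> ?X) (\<lambda>p. {i\<in>I. snd p \<in> N i (fst p)})"
  have "bij_betw (\<lambda>((j,s),i). ((i,j),s)) ?S {t \<in> TT I N. P (snd (fst t)) \<and> P (snd t)}"
    using sub unfolding bij_betw_def inj_on_def TT_def by (auto simp: image_iff) blast+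
  hence "card {t \<in> TT I N. P (snd (fst t)) \<and> P (snd t)} = card ?S"
    by (simp add: bij_betw_same_card)
  moreover have "card ?S = (\<Sum>p\<in>?X \<times> ?X. card {i\<in>I. snd p \<in> N i (fst p)})"
    using fin by (intro card_SigmaI) auto
  moreover have "(\<Sum>p\<in>?X \<times> ?X. card {i\<in>I. snd p \<in> N i (fst p)}) = (\<Sum>p\<in>?X \<times> ?X. k)"
    using H by (intro sum.cong) auto
  ultimately show ?thesis by (simp add: card_cartesian_product)
qed

lemma b1: "1 \<le> i \<Longrightarrow> 1 \<le> j \<Longrightarrow> 1 \<le> s \<Longrightarrow> i \<le> a \<Longrightarrow> j \<le> a \<Longrightarrow> s \<le> a \<Longrightarrow> s \<in> blockM a b c i j"
  unfolding blockM_def Let_def by simp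
lemma b2: "a < i \<Longrightarrow> a < j \<Longrightarrow> a < s \<Longrightarrow> i \<le> a+b \<Longrightarrow> j \<le> a+b \<Longrightarrow> s \<le> a+b \<Longrightarrow> s \<in> blockM a b c i j"
  unfolding blockM_def Let_def by simp
lemma b3: "a+b < i \<Longrightarrow> a+b < j \<Longrightarrow> a+b < s \<Longrightarrow> i \<le> a+b+c \<Longrightarrow> j \<le> a+b+c \<Longrightarrow> s \<le> a+b+c \<Longrightarrow> s \<in> blockM a b c i j"
  unfolding blockM_def Let_def by simp

lemma gle:
  fixes x y z :: nat
  assumes "x < 3" "y < 3" "z < 3" "\<not> (x = y \<and> y = z)"
  shows "(\<Sum>X<3. of_bool (x = X \<and> y = X) + of_bool (x = X \<and> z = X) + of_bool (y = X \<and> z = X)) \<le> (1::nat)"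
proof -
  have "x \<in> {0,1,2}" "y \<in> {0,1,2}" "z \<in> {0,1,2}" using assms by auto
  then show ?thesis using assms(4) by (simp add: numeral_3_eq_3 lessThan_Suc) (elim disjE; simp)
qed
theorem theorem1:
  fixes a b c k :: nat and N :: "nat \<Rightarrow> nat \<Rightarrow> nat set"
  assumes "a > 0" and "b > 0" and "c > 0"
    and "\<not> (a = b \<and> b = c)"
    and "k \<ge> 1"
    and "array2 (a + b + c) k N"
  shows "\<exists>i\<in>{1..a+b+c}. \<exists>j\<in>{1..a+b+c}. blockM a b c i j \<inter> N i j \<noteq> {}"
proof (rule ccontr)
  assume nh: "\<not> ?thesis"
  define n where "n = a + b + c"
  define I where "I = {1..n}"
  define cls where "cls x = (if x \<le> a then 0 else if x \<le> a + b then 1 else (2::nat))" for x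
  have cls3: "cls x < 3" for x unfolding cls_def by auto
  have fin: "finite I" unfolding I_def by simp
  have A: "\<forall>i\<in>I. \<forall>j\<in>I. N i j \<subseteq> I \<and> card (N i j) = k"
    and R: "\<forall>i\<in>I. \<forall>s\<in>I. card {j\<in>I. s \<in> N i j} = k"
    and C: "\<forall>j\<in>I. \<forall>s\<in>I. card {i\<in>I. s \<in> N i j} = k"
    using assms(6) unfolding array2_def I_def n_def by auto
  have finN: "\<forall>i\<in>I. \<forall>j\<in>I. finite (N i j) \<and> card (N i j) = k"
    using A fin finite_subset by blast
  have sub: "\<forall>i\<in>I. \<forall>j\<in>I. N i j \<subseteq> I" using A by blast
  let ?T = "TT I N"
  have finT: "finite ?T" unfolding TT_def using fin finN by auto
  have cardT: "card ?T = n * n * k"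
  proof -
    have "card ?T = (\<Sum>p\<in>I \<times> I. card (N (fst p) (snd p)))"
      unfolding TT_def using fin finN by (intro card_SigmaI) auto
    also have "\<dots> = (\<Sum>p\<in>I \<times> I. k)" using finN by (intro sum.cong) auto
    finally show ?thesis by (simp add: card_cartesian_product I_def)
  qed
  have inblk: "s \<in> blockM a b c i j" if "i \<in> I" "j \<in> I" "s \<in> I" "cls i = cls j" "cls j = cls s" for i j s
  proof -
    have r: "1 \<le> i" "i \<le> a+b+c" "1 \<le> j" "j \<le> a+b+c" "1 \<le> s" "s \<le> a+b+c"
      using that(1-3) unfolding I_def n_def by auto
    have e: "cls j = cls i" "cls s = cls i" using that(4,5) by simp_all
    have c0: "x \<le> a" if "cls x = 0" for x using that unfolding cls_def by (simp split: if_splits)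
    have c1: "a < x \<and> x \<le> a + b" if "cls x = 1" for x using that unfolding cls_def by (simp split: if_splits)
    have c2: "a + b < x" if "cls x = 2" for x using that unfolding cls_def by (simp split: if_splits)
    consider "cls i = 0" | "cls i = 1" | "cls i = 2" using cls3[of i] by linarith
    then show ?thesis
    proof cases
      case 1
      then show ?thesis using b1[where i=i and j=j and s=s and a=a and b=b and c=c] r c0 e by metis
    next
      case 2
      then show ?thesis using b2[where i=i and j=j and s=s and a=a and b=b and c=c] r c1 e by metis
    next
      case 3
      then show ?thesis using b3[where i=i and j=j and s=s and a=a and b=b and c=c] r c2 e by metis
    qed
  qed
  have notall: "\<not> (cls i = cls j \<and> cls j = cls s)" if "((i,j),s) \<in> ?T" for i j s
  proof
    assume e: "cls i = cls j \<and> cls j = cls s"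
    have ij: "i \<in> I" "j \<in> I" "s \<in> N i j" using that unfolding TT_def by auto
    with sub have "s \<in> I" by blast
    with ij e inblk have "s \<in> blockM a b c i j \<inter> N i j" by blast
    with nh ij show False unfolding I_def n_def by blast
  qed
  define g :: "(nat \<times> nat) \<times> nat \<Rightarrow> nat" where "g t = (\<Sum>X<3. of_bool (cls (fst (fst t)) = X \<and> cls (snd (fst t)) = X)
       + of_bool (cls (fst (fst t)) = X \<and> cls (snd t) = X) + of_bool (cls (snd (fst t)) = X \<and> cls (snd t) = X))" for t
  have g1: "g t \<le> 1" if "t \<in> ?T" for t
  proof -
    obtain i j s where t: "t = ((i,j),s)" by (metis prod.collapse)
    show ?thesis unfolding g_def t fst_conv snd_conv
      by (rule gle[OF cls3 cls3 cls3 notall]) (use that t in simp)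
  qed
  have "(\<Sum>t\<in>?T. g t) \<le> (\<Sum>t\<in>?T. 1)" using g1 by (intro sum_mono) auto
  hence le: "(\<Sum>t\<in>?T. g t) \<le> n * n * k" using cardT by simp
  define sz where "sz X = card {x\<in>I. cls x = X}" for X
  have eq: "(\<Sum>t\<in>?T. g t) = (\<Sum>X<3. 3 * (sz X * sz X * k))"
  proof -
    have "(\<Sum>t\<in>?T. g t) = (\<Sum>X<3. \<Sum>t\<in>?T. of_bool (cls (fst (fst t)) = X \<and> cls (snd (fst t)) = X)
       + of_bool (cls (fst (fst t)) = X \<and> cls (snd t) = X) + of_bool (cls (snd (fst t)) = X \<and> cls (snd t) = X))"
      unfolding g_def by (rule sum.swap)
    also have "\<dots> = (\<Sum>X<3. card {t\<in>?T. cls (fst (fst t)) = X \<and> cls (snd (fst t)) = X}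
       + card {t\<in>?T. cls (fst (fst t)) = X \<and> cls (snd t) = X} + card {t\<in>?T. cls (snd (fst t)) = X \<and> cls (snd t) = X})"
    proof (rule sum.cong[OF refl])
      fix X :: nat
      have ob: "(\<Sum>t\<in>?T. of_bool (P t) :: nat) = card {t\<in>?T. P t}" for P
        using finT by (simp add: Int_def)
      show "(\<Sum>t\<in>?T. of_bool (cls (fst (fst t)) = X \<and> cls (snd (fst t)) = X)
       + of_bool (cls (fst (fst t)) = X \<and> cls (snd t) = X) + of_bool (cls (snd (fst t)) = X \<and> cls (snd t) = X)) =
       card {t\<in>?T. cls (fst (fst t)) = X \<and> cls (snd (fst t)) = X}
       + card {t\<in>?T. cls (fst (fst t)) = X \<and> cls (snd t) = X} + card {t\<in>?T. cls (snd (fst t)) = X \<and> cls (snd t) = X}"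
        by (simp only: sum.distrib ob)
    qed
    also have "\<dots> = (\<Sum>X<3. 3 * (sz X * sz X * k))"
    proof (rule sum.cong[OF refl])
      fix X :: nat
      have "card {t\<in>?T. cls (fst (fst t)) = X \<and> cls (snd (fst t)) = X} = sz X * sz X * k"
        unfolding sz_def by (rule L1[OF fin finN, of "\<lambda>x. cls x = X"])
      moreover have "card {t\<in>?T. cls (fst (fst t)) = X \<and> cls (snd t) = X} = sz X * sz X * k"
        unfolding sz_def by (rule L2[OF fin R sub, of "\<lambda>x. cls x = X"])
      moreover have "card {t\<in>?T. cls (snd (fst t)) = X \<and> cls (snd t) = X} = sz X * sz X * k"
        unfolding sz_def by (rule L3[OF fin C sub, of "\<lambda>x. cls x = X"])
      ultimately show "card {t\<in>?T. cls (fst (fst t)) = X \<and> cls (snd (fst t)) = X}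
       + card {t\<in>?T. cls (fst (fst t)) = X \<and> cls (snd t) = X} + card {t\<in>?T. cls (snd (fst t)) = X \<and> cls (snd t) = X}
       = 3 * (sz X * sz X * k)" by simp
    qed
    finally show ?thesis .
  qed
  have s0: "sz 0 = a"
  proof -
    have "{x\<in>I. cls x = 0} = {1..a}" unfolding I_def n_def cls_def by auto
    thus ?thesis unfolding sz_def by simp
  qed
  have s1: "sz 1 = b"
  proof -
    have "{x\<in>I. cls x = 1} = {a+1..a+b}" unfolding I_def n_def cls_def by auto
    thus ?thesis unfolding sz_def by simp
  qed
  have s2: "sz 2 = c"
  proof -
    have "{x\<in>I. cls x = 2} = {a+b+1..a+b+c}" unfolding I_def n_def cls_def by auto
    thus ?thesis unfolding sz_def by simp
  qed
  have "(\<Sum>X<3. 3 * (sz X * sz X * k)) = 3 * (a*a + b*b + c*c) * k"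
    using s0 s1 s2 by (simp add: numeral_3_eq_3 numeral_2_eq_2 lessThan_Suc algebra_simps)
  with le eq have "3 * (a*a + b*b + c*c) * k \<le> n * n * k" by simp
  hence "3 * (a*a + b*b + c*c) \<le> n * n" using assms(5) by simp
  hence "int (3 * (a*a + b*b + c*c)) \<le> int (n * n)" by (simp only: of_nat_le_iff)
  hence i1: "3 * (int a*int a + int b*int b + int c*int c) \<le> (int a + int b + int c) * (int a + int b + int c)"
    unfolding n_def by simp
  have "(int a - int b)^2 + (int b - int c)^2 + (int c - int a)^2 > 0"
  proof -
    have "int a \<noteq> int b \<or> int b \<noteq> int c" using assms(4) by auto
    then show ?thesis
    proof
      assume "int a \<noteq> int b"
      then have "(int a - int b)^2 > 0" by simp
      moreover have "(int b - int c)^2 \<ge> 0" "(int c - int a)^2 \<ge> 0" by simp_all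
      ultimately show ?thesis by linarith
    next
      assume "int b \<noteq> int c"
      then have "(int b - int c)^2 > 0" by simp
      moreover have "(int a - int b)^2 \<ge> 0" "(int c - int a)^2 \<ge> 0" by simp_all
      ultimately show ?thesis by linarith
    qed
  qed
  then show False using i1 by (simp add: power2_eq_square algebra_simps)
qed

end
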